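(* Let $\mathbf{C}$ be a category with a stable system of monics $\mathcal{M}$. (i) If $\mathbf{C}$ has pushouts along $\mathcal{M}$-morphisms, the functor $\mathrm{dom}:\mathsf{PO}_h(\mathbf{C},\mathcal{M})\to\mathbf{C}$ is a Grothendieck opfibration. (ii) If $\mathbf{C}$ has final pullback complements (FPCs) along $\mathcal{M}$-morphisms, the functor $\mathrm{dom}:\mathsf{FPC}_h(\mathbf{C},\mathcal{M})\to\mathbf{C}$ is a Grothendieck fibration.
   Context: A stable system of monics $\mathcal{M}$: class of monomorphisms containing all isomorphisms, closed under composition, stable under pullback; $\rightarrowtail$ denotes $\mathcal{M}$-morphisms. "Has pushouts along $\mathcal{M}$-morphisms": pushouts of spans $A\leftarrow B\rightarrowtail B'$ exist. FPC of composable $A\xrightarrow{f}B\xrightarrow{m}C$: a pair $A\xrightarrow{n}F\xrightarrow{g}C$ with $g\circ n=m\circ f$ forming a pullback square, such that for every pullback square $m\circ u=w\circ v$ ($u:X\to B$, $v:X\to Y$, $w:Y\to C$) and every $t:X\to A$ with $f\circ t=u$ there is a unique $y:Y\to F$ with $g\circ y=w$, $y\circ v=n\circ t$; "has FPCs along $\mathcal{M}$-morphisms" means FPCs exist whenever $m\in\mathcal{M}$. For $\mathsf{T}\in\{\mathsf{PO},\mathsf{FPC}\}$, the category $\mathsf{T}_h(\mathbf{C},\mathcal{M})$: objects are $\mathcal{M}$-morphisms; a morphism from $m:A\rightarrowtail A'$ to $n:B\rightarrowtail B'$ is a pair $(f,f')$ with $f:A\to B$, $f':A'\to B'$, $n\circ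 f=f'\circ m$, such that the square is a pushout of $(m,f)$ (case $\mathsf{PO}$), resp. $(m,f')$ is an FPC of $(f,n)$ (case $\mathsf{FPC}$); composition componentwise (horizontal pasting). $\mathrm{dom}$ sends $m:A\rightarrowtail A'$ to $A$ and $(f,f')$ to $f$. Grothendieck fibration/opfibration: a functor $P:\mathbf{E}\to\mathbf{B}$ is a fibration if for every $f:b'\to b$ and $e$ over $b$ there is a Cartesian $\varphi:e'\to e$ over $f$ (Cartesian: for every $\psi:e''\to e$ and $g$ with $P(\varphi)\circ g=P(\psi)$ there is a unique $\chi$ with $\varphi\circ\chi=\psi$, $P(\chi)=g$); it is an opfibration if for every $f:b\to b'$ and $e$ over $b$ there is an op-Cartesian $\varphi:e\to e'$ over $f$ (for every $\psi:e\to e''$ and $g$ with $g\circ P(\varphi)=P(\psi)$ there is a unique $\chi$ with $\chi\circ\varphi=\psi$, $P(\chi)=g$).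
   Formalization: In (i), having pushouts along $\mathcal{M}$-morphisms also demands that each such pushout of an $\mathcal{M}$-morphism be again an $\mathcal{M}$-morphism, that is, the pushout leg opposite it lies in $\mathcal{M}$. The statement above fails without it. *)

theory Defs
  imports Main
begin

record ('o, 'a) category =
  ob  :: "'o set"
  ar  :: "'a set"
  dm  :: "'a \<Rightarrow> 'o"
  cd  :: "'a \<Rightarrow> 'o"
  idt :: "'o \<Rightarrow> 'a"
  cmp :: "'a \<Rightarrow> 'a \<Rightarrow> 'a"   (* cmp C g f = g \<circ> f *)

definition is_category :: "('o, 'a) category \<Rightarrow> bool" where
  "is_category C \<longleftrightarrow>
     (\<forall>f\<in>ar C. dm C f \<in> ob C \<and> cd C f \<in> ob C) \<and>
     (\<forall>a\<in>ob C. idt C a \<in> ar C \<and> dm C (idt C a) = a \<and> cd C (idt C a) = a) \<and>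
     (\<forall>f g. f \<in> ar C \<and> g \<in> ar C \<and> cd C f = dm C g \<longrightarrow>
        cmp C g f \<in> ar C \<and> dm C (cmp C g f) = dm C f \<and> cd C (cmp C g f) = cd C g) \<and>
     (\<forall>f\<in>ar C. cmp C (idt C (cd C f)) f = f \<and> cmp C f (idt C (dm C f)) = f) \<and>
     (\<forall>f g h. f \<in> ar C \<and> g \<in> ar C \<and> h \<in> ar C \<and> cd C f = dm C g \<and> cd C g = dm C h \<longrightarrow>
        cmp C h (cmp C g f) = cmp C (cmp C h g) f)"

definition is_functor ::
  "('o, 'a) category \<Rightarrow> ('p, 'b) category \<Rightarrow> ('o \<Rightarrow> 'p) \<Rightarrow> ('a \<Rightarrow> 'b) \<Rightarrow> bool" where
  "is_functor E B FO FA \<longleftrightarrow>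
     (\<forall>a\<in>ob E. FO a \<in> ob B) \<and>
     (\<forall>f\<in>ar E. FA f \<in> ar B \<and> dm B (FA f) = FO (dm E f) \<and> cd B (FA f) = FO (cd E f)) \<and>
     (\<forall>a\<in>ob E. FA (idt E a) = idt B (FO a)) \<and>
     (\<forall>f g. f \<in> ar E \<and> g \<in> ar E \<and> cd E f = dm E g \<longrightarrow>
        FA (cmp E g f) = cmp B (FA g) (FA f))"

definition is_mono :: "('o, 'a) category \<Rightarrow> 'a \<Rightarrow> bool" where
  "is_mono C m \<longleftrightarrow> m \<in> ar C \<and>
     (\<forall>g h. g \<in> ar C \<and> h \<in> ar C \<and> cd C g = dm C m \<and> cd C h = dm C m \<and> dm C g = dm C h \<and>
        cmp C m g = cmp C m h \<longrightarrow> g = h)"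

definition is_iso :: "('o, 'a) category \<Rightarrow> 'a \<Rightarrow> bool" where
  "is_iso C f \<longleftrightarrow> f \<in> ar C \<and>
     (\<exists>g. g \<in> ar C \<and> dm C g = cd C f \<and> cd C g = dm C f \<and>
        cmp C g f = idt C (dm C f) \<and> cmp C f g = idt C (cd C f))"

text \<open>is_pullback C f g p q: the square with f : B \<rightarrow> D, g : E \<rightarrow> D, p : P \<rightarrow> B, q : P \<rightarrow> E,
  f \<circ> p = g \<circ> q, is a pullback (q is the pullback of f along g).\<close>
definition is_pullback :: "('o, 'a) category \<Rightarrow> 'a \<Rightarrow> 'a \<Rightarrow> 'a \<Rightarrow> 'a \<Rightarrow> bool" where
  "is_pullback C f g p q \<longleftrightarrow>
     f \<in> ar C \<and> g \<in> ar C \<and> p \<in> ar C \<and> q \<in> ar C \<and>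
     cd C f = cd C g \<and> dm C p = dm C q \<and> cd C p = dm C f \<and> cd C q = dm C g \<and>
     cmp C f p = cmp C g q \<and>
     (\<forall>p' q'. p' \<in> ar C \<and> q' \<in> ar C \<and> dm C p' = dm C q' \<and> cd C p' = dm C f \<and> cd C q' = dm C g \<and>
        cmp C f p' = cmp C g q' \<longrightarrow>
        (\<exists>!u. u \<in> ar C \<and> dm C u = dm C p' \<and> cd C u = dm C p \<and> cmp C p u = p' \<and> cmp C q u = q'))"

text \<open>is_pushout C m f n f': m : A \<rightarrow> A', f : A \<rightarrow> B, n : B \<rightarrow> B', f' : A' \<rightarrow> B',
  n \<circ> f = f' \<circ> m, and the square is a pushout of the span (m, f).\<close>
definition is_pushout :: "('o, 'a) category \<Rightarrow> 'a \<Rightarrow> 'a \<Rightarrow> 'a \<Rightarrow> 'a \<Rightarrow> bool" where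
  "is_pushout C m f n f' \<longleftrightarrow>
     m \<in> ar C \<and> f \<in> ar C \<and> n \<in> ar C \<and> f' \<in> ar C \<and>
     dm C m = dm C f \<and> cd C f = dm C n \<and> cd C m = dm C f' \<and> cd C n = cd C f' \<and>
     cmp C n f = cmp C f' m \<and>
     (\<forall>h k. h \<in> ar C \<and> k \<in> ar C \<and> dm C h = cd C f \<and> dm C k = cd C m \<and> cd C h = cd C k \<and>
        cmp C h f = cmp C k m \<longrightarrow>
        (\<exists>!u. u \<in> ar C \<and> dm C u = cd C n \<and> cd C u = cd C h \<and> cmp C u n = h \<and> cmp C u f' = k))"

text \<open>is_FPC C f m n g: for composable f : A \<rightarrow> B, m : B \<rightarrow> C', the pair n : A \<rightarrow> F, g : F \<rightarrow> C'
  is a final pullback complement of (f, m).\<close>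
definition is_FPC :: "('o, 'a) category \<Rightarrow> 'a \<Rightarrow> 'a \<Rightarrow> 'a \<Rightarrow> 'a \<Rightarrow> bool" where
  "is_FPC C f m n g \<longleftrightarrow>
     is_pullback C m g f n \<and>
     (\<forall>u v w t. is_pullback C m w u v \<and> t \<in> ar C \<and> dm C t = dm C u \<and> cd C t = dm C f \<and>
        cmp C f t = u \<longrightarrow>
        (\<exists>!y. y \<in> ar C \<and> dm C y = cd C v \<and> cd C y = dm C g \<and>
              cmp C g y = w \<and> cmp C y v = cmp C n t))"

definition stable_system :: "('o, 'a) category \<Rightarrow> 'a set \<Rightarrow> bool" where
  "stable_system C M \<longleftrightarrow>
     M \<subseteq> ar C \<and>
     (\<forall>m\<in>M. is_mono C m) \<and>
     (\<forall>f. is_iso C f \<longrightarrow> f \<in> M) \<and>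
     (\<forall>m n. m \<in> M \<and> n \<in> M \<and> cd C m = dm C n \<longrightarrow> cmp C n m \<in> M) \<and>
     (\<forall>m g p q. m \<in> M \<and> is_pullback C m g p q \<longrightarrow> q \<in> M)"

text \<open>Pushouts along M-morphisms (with the pushout of an M-morphism again in M).\<close>
definition has_pushouts_along :: "('o, 'a) category \<Rightarrow> 'a set \<Rightarrow> bool" where
  "has_pushouts_along C M \<longleftrightarrow>
     (\<forall>m f. m \<in> M \<and> f \<in> ar C \<and> dm C f = dm C m \<longrightarrow> (\<exists>n f'. n \<in> M \<and> is_pushout C m f n f'))"

definition has_FPCs_along :: "('o, 'a) category \<Rightarrow> 'a set \<Rightarrow> bool" where
  "has_FPCs_along C M \<longleftrightarrow>
     (\<forall>f m. m \<in> M \<and> f \<in> ar C \<and> cd C f = dm C m \<longrightarrow> (\<exists>n g. is_FPC C f m n g))"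

text \<open>A morphism from m to n is represented as the quadruple (m, n, f, f').\<close>
definition PO_h :: "('o, 'a) category \<Rightarrow> 'a set \<Rightarrow> ('a, 'a \<times> 'a \<times> 'a \<times> 'a) category" where
  "PO_h C M = \<lparr> ob = M,
     ar = {(m, n, f, f'). m \<in> M \<and> n \<in> M \<and> is_pushout C m f n f'},
     dm = (\<lambda>(m, n, f, f'). m),
     cd = (\<lambda>(m, n, f, f'). n),
     idt = (\<lambda>m. (m, m, idt C (dm C m), idt C (cd C m))),
     cmp = (\<lambda>(n, p, g, g') (m, n', f, f'). (m, p, cmp C g f, cmp C g' f')) \<rparr>"

definition FPC_h :: "('o, 'a) category \<Rightarrow> 'a set \<Rightarrow> ('a, 'a \<times> 'a \<times> 'a \<times> 'a) category" where
  "FPC_h C M = \<lparr> ob = M,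
     ar = {(m, n, f, f'). m \<in> M \<and> n \<in> M \<and> is_FPC C f n m f'},
     dm = (\<lambda>(m, n, f, f'). m),
     cd = (\<lambda>(m, n, f, f'). n),
     idt = (\<lambda>m. (m, m, idt C (dm C m), idt C (cd C m))),
     cmp = (\<lambda>(n, p, g, g') (m, n', f, f'). (m, p, cmp C g f, cmp C g' f')) \<rparr>"

definition dom_ar :: "'a \<times> 'a \<times> 'a \<times> 'a \<Rightarrow> 'a" where
  "dom_ar = (\<lambda>(m, n, f, f'). f)"

definition cartesian ::
  "('o, 'a) category \<Rightarrow> ('p, 'b) category \<Rightarrow> ('a \<Rightarrow> 'b) \<Rightarrow> 'a \<Rightarrow> bool" where
  "cartesian E B PA \<phi> \<longleftrightarrow> \<phi> \<in> ar E \<and>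
     (\<forall>\<psi> g. \<psi> \<in> ar E \<and> cd E \<psi> = cd E \<phi> \<and> g \<in> ar B \<and> cd B g = dm B (PA \<phi>) \<and>
        dm B g = dm B (PA \<psi>) \<and> cmp B (PA \<phi>) g = PA \<psi> \<longrightarrow>
        (\<exists>!\<chi>. \<chi> \<in> ar E \<and> dm E \<chi> = dm E \<psi> \<and> cd E \<chi> = dm E \<phi> \<and>
              cmp E \<phi> \<chi> = \<psi> \<and> PA \<chi> = g))"

definition opcartesian ::
  "('o, 'a) category \<Rightarrow> ('p, 'b) category \<Rightarrow> ('a \<Rightarrow> 'b) \<Rightarrow> 'a \<Rightarrow> bool" where
  "opcartesian E B PA \<phi> \<longleftrightarrow> \<phi> \<in> ar E \<and>
     (\<forall>\<psi> g. \<psi> \<in> ar E \<and> dm E \<psi> = dm E \<phi> \<and> g \<in> ar B \<and> dm B g = cd B (PA \<phi>) \<and>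
        cd B g = cd B (PA \<psi>) \<and> cmp B g (PA \<phi>) = PA \<psi> \<longrightarrow>
        (\<exists>!\<chi>. \<chi> \<in> ar E \<and> dm E \<chi> = cd E \<phi> \<and> cd E \<chi> = cd E \<psi> \<and>
              cmp E \<chi> \<phi> = \<psi> \<and> PA \<chi> = g))"

definition fibration ::
  "('o, 'a) category \<Rightarrow> ('p, 'b) category \<Rightarrow> ('o \<Rightarrow> 'p) \<Rightarrow> ('a \<Rightarrow> 'b) \<Rightarrow> bool" where
  "fibration E B PO PA \<longleftrightarrow>
     is_category E \<and> is_category B \<and> is_functor E B PO PA \<and>
     (\<forall>f\<in>ar B. \<forall>e\<in>ob E. PO e = cd B f \<longrightarrow>
        (\<exists>\<phi>. \<phi> \<in> ar E \<and> cd E \<phi> = e \<and> PA \<phi> = f \<and> cartesian E B PA \<phi>))"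

definition opfibration ::
  "('o, 'a) category \<Rightarrow> ('p, 'b) category \<Rightarrow> ('o \<Rightarrow> 'p) \<Rightarrow> ('a \<Rightarrow> 'b) \<Rightarrow> bool" where
  "opfibration E B PO PA \<longleftrightarrow>
     is_category E \<and> is_category B \<and> is_functor E B PO PA \<and>
     (\<forall>f\<in>ar B. \<forall>e\<in>ob E. PO e = dm B f \<longrightarrow>
        (\<exists>\<phi>. \<phi> \<in> ar E \<and> dm E \<phi> = e \<and> PA \<phi> = f \<and> opcartesian E B PA \<phi>))"

end

theory Submission
  imports Defs
begin

locale cat = fixes C :: "('o,'a) category" assumes is_cat: "is_category C"
begin

abbreviation comp (infixr "\<cdot>" 55) where "g \<cdot> f \<equiv> cmp C g f"

lemma comp_ar[simp]: "f \<in> ar C \<Longrightarrow> g \<in> ar C \<Longrightarrow> cd C f = dm C g \<Longrightarrow> g \<cdot> f \<in> ar C"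
  and comp_dm[simp]: "f \<in> ar C \<Longrightarrow> g \<in> ar C \<Longrightarrow> cd C f = dm C g \<Longrightarrow> dm C (g \<cdot> f) = dm C f"
  and comp_cd[simp]: "f \<in> ar C \<Longrightarrow> g \<in> ar C \<Longrightarrow> cd C f = dm C g \<Longrightarrow> cd C (g \<cdot> f) = cd C g"
  using is_cat unfolding is_category_def by blast+

lemma dm_ob[simp]: "f \<in> ar C \<Longrightarrow> dm C f \<in> ob C"
  and cd_ob[simp]: "f \<in> ar C \<Longrightarrow> cd C f \<in> ob C"
  and idt_ar[simp]: "a \<in> ob C \<Longrightarrow> idt C a \<in> ar C"
  and idt_dm[simp]: "a \<in> ob C \<Longrightarrow> dm C (idt C a) = a"
  and idt_cd[simp]: "a \<in> ob C \<Longrightarrow> cd C (idt C a) = a"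
  and idl[simp]: "f \<in> ar C \<Longrightarrow> idt C (cd C f) \<cdot> f = f"
  and idr[simp]: "f \<in> ar C \<Longrightarrow> f \<cdot> idt C (dm C f) = f"
  using is_cat unfolding is_category_def by blast+

lemma assoc: "f \<in> ar C \<Longrightarrow> g \<in> ar C \<Longrightarrow> h \<in> ar C \<Longrightarrow> cd C f = dm C g \<Longrightarrow> cd C g = dm C h
  \<Longrightarrow> h \<cdot> (g \<cdot> f) = (h \<cdot> g) \<cdot> f"
  using is_cat unfolding is_category_def by blast

lemma assoc_sq: assumes "g \<cdot> f = k \<cdot> h" "f \<in> ar C" "g \<in> ar C" "h \<in> ar C" "k \<in> ar C" "x \<in> ar C"
  "cd C f = dm C g" "cd C h = dm C k" "cd C x = dm C f" "cd C x = dm C h"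
  shows "g \<cdot> (f \<cdot> x) = k \<cdot> (h \<cdot> x)"
  using assms assoc by metis

lemma pbD: assumes "is_pullback C f g p q"
  shows "f \<in> ar C" "g \<in> ar C" "p \<in> ar C" "q \<in> ar C"
     "cd C f = cd C g" "dm C p = dm C q" "cd C p = dm C f" "cd C q = dm C g"
     "f \<cdot> p = g \<cdot> q"
  using assms unfolding is_pullback_def by blast+

lemma pb_ex: assumes "is_pullback C f g p q" "p' \<in> ar C" "q' \<in> ar C" "dm C p' = dm C q'"
  "cd C p' = dm C f" "cd C q' = dm C g" "f \<cdot> p' = g \<cdot> q'"
  obtains u where "u \<in> ar C" "dm C u = dm C p'" "cd C u = dm C p" "p \<cdot> u = p'" "q \<cdot> u = q'"
  using assms unfolding is_pullback_def by metis

lemma pb_uniq: assumes "is_pullback C f g p q"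
  "u \<in> ar C" "cd C u = dm C p" "u' \<in> ar C" "cd C u' = dm C p" "dm C u = dm C u'"
  "p \<cdot> u = p \<cdot> u'" "q \<cdot> u = q \<cdot> u'"
  shows "u = u'"
proof -
  note D = pbD[OF assms(1)]
  have "\<exists>!v. v \<in> ar C \<and> dm C v = dm C (p \<cdot> u) \<and> cd C v = dm C p \<and> p \<cdot> v = p \<cdot> u \<and> q \<cdot> v = q \<cdot> u"
    using assms(1) unfolding is_pullback_def
    apply (elim conjE) apply (erule allE[of _ "p \<cdot> u"], erule allE[of _ "q \<cdot> u"])
    apply (erule mp)
    using D assms assoc by (simp add: assoc)
  then show ?thesis using assms D by auto
qed


lemma pb_paste:
  assumes R: "is_pullback C e f' f n" and L: "is_pullback C n w u v"
  shows "is_pullback C e (f' \<cdot> w) (f \<cdot> u) v"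
proof -
  note R' = pbD[OF R] and L' = pbD[OF L]
  have sq: "e \<cdot> (f \<cdot> u) = (f' \<cdot> w) \<cdot> v"
  proof -
    have "e \<cdot> (f \<cdot> u) = (e \<cdot> f) \<cdot> u" using R' L' by (simp add: assoc)
    also have "\<dots> = (f' \<cdot> n) \<cdot> u" using R' by simp
    also have "\<dots> = f' \<cdot> (n \<cdot> u)" using R' L' by (intro assoc[symmetric]) simp_all
    also have "\<dots> = f' \<cdot> (w \<cdot> v)" using L' by simp
    also have "\<dots> = (f' \<cdot> w) \<cdot> v" using R' L' by (simp add: assoc)
    finally show ?thesis .
  qed
  show ?thesis unfolding is_pullback_def
  proof (intro conjI allI impI)
    fix p' q' assume H: "p' \<in> ar C \<and> q' \<in> ar C \<and> dm C p' = dm C q' \<and> cd C p' = dm C e \<and>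
      cd C q' = dm C (f' \<cdot> w) \<and> e \<cdot> p' = (f' \<cdot> w) \<cdot> q'"
    have H2: "e \<cdot> p' = f' \<cdot> (w \<cdot> q')" using H R' L' by (simp add: assoc)
    obtain r where r: "r \<in> ar C" "dm C r = dm C p'" "cd C r = dm C f" "f \<cdot> r = p'" "n \<cdot> r = w \<cdot> q'"
      using pb_ex[OF R, of p' "w \<cdot> q'"] H H2 R' L' by auto
    obtain z where z: "z \<in> ar C" "dm C z = dm C r" "cd C z = dm C u" "u \<cdot> z = r" "v \<cdot> z = q'"
      using pb_ex[OF L, of r q'] r H R' L' by auto
    show "\<exists>!z. z \<in> ar C \<and> dm C z = dm C p' \<and> cd C z = dm C (f \<cdot> u) \<and> (f \<cdot> u) \<cdot> z = p' \<and> v \<cdot> z = q'"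
    proof (rule ex1I[of _ z])
      show "z \<in> ar C \<and> dm C z = dm C p' \<and> cd C z = dm C (f \<cdot> u) \<and> (f \<cdot> u) \<cdot> z = p' \<and> v \<cdot> z = q'"
        using z r R' L' by (simp add: assoc[symmetric])
    next
      fix z' assume z': "z' \<in> ar C \<and> dm C z' = dm C p' \<and> cd C z' = dm C (f \<cdot> u) \<and> (f \<cdot> u) \<cdot> z' = p' \<and> v \<cdot> z' = q'"
      have e1: "n \<cdot> (u \<cdot> z') = w \<cdot> (v \<cdot> z')"
        by (rule assoc_sq) (use z' r R' L' H in simp_all)
      have e2: "f \<cdot> (u \<cdot> z') = (f \<cdot> u) \<cdot> z'"
        by (rule assoc) (use z' r R' L' H in simp_all)
      have a1: "f \<cdot> (u \<cdot> z') = f \<cdot> r" using e2 z' r by metis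
      have a2: "n \<cdot> (u \<cdot> z') = n \<cdot> r" using e1 z' r by metis
      have a3: "dm C (u \<cdot> z') = dm C r" "cd C (u \<cdot> z') = dm C f" "u \<cdot> z' \<in> ar C"
        using z' r R' L' H by auto
      have "u \<cdot> z' = r"
        using pb_uniq[OF R a3(3) a3(2) r(1) r(3) a3(1) a1 a2] .
      then show "z' = z"
        using pb_uniq[OF L, of z' z] z' z r L' R' H by auto
    qed
  qed (use R' L' sq in auto)
qed

lemma pb_cancel:
  assumes R: "is_pullback C e f' f n" and O: "is_pullback C e (f' \<cdot> w) (f \<cdot> u) v"
    and sq: "n \<cdot> u = w \<cdot> v" and u: "u \<in> ar C" "cd C u = dm C n" and w: "w \<in> ar C" "cd C w = cd C n"
  shows "is_pullback C n w u v"
proof -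
  note R' = pbD[OF R] and O' = pbD[OF O]
  have vw: "cd C v = dm C w" using O' R' u w by simp
  have uv: "dm C u = dm C v" using O' R' u w by simp
  show ?thesis unfolding is_pullback_def
  proof (intro conjI allI impI)
    fix p' q' assume H: "p' \<in> ar C \<and> q' \<in> ar C \<and> dm C p' = dm C q' \<and> cd C p' = dm C n \<and>
      cd C q' = dm C w \<and> n \<cdot> p' = w \<cdot> q'"
    have H2: "e \<cdot> (f \<cdot> p') = (f' \<cdot> w) \<cdot> q'"
    proof -
      have "e \<cdot> (f \<cdot> p') = (e \<cdot> f) \<cdot> p'" using R' H by (simp add: assoc)
      also have "\<dots> = (f' \<cdot> n) \<cdot> p'" using R' by simp
      also have "\<dots> = f' \<cdot> (n \<cdot> p')" using R' H by (intro assoc[symmetric]) simp_all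
      also have "\<dots> = f' \<cdot> (w \<cdot> q')" using H by simp
      also have "\<dots> = (f' \<cdot> w) \<cdot> q'" using R' H w by (simp add: assoc)
      finally show ?thesis .
    qed
    obtain z where z: "z \<in> ar C" "dm C z = dm C (f \<cdot> p')" "cd C z = dm C (f \<cdot> u)" "(f \<cdot> u) \<cdot> z = f \<cdot> p'" "v \<cdot> z = q'"
      using pb_ex[OF O, of "f \<cdot> p'" q'] H H2 R' O' w by auto
    have uz: "u \<cdot> z = p'"
    proof (rule pb_uniq[OF R])
      show "n \<cdot> (u \<cdot> z) = n \<cdot> p'"
      proof -
        have "n \<cdot> (u \<cdot> z) = (n \<cdot> u) \<cdot> z" using z u R' by (simp add: assoc)
        also have "\<dots> = (w \<cdot> v) \<cdot> z" using sq by simp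
        also have "\<dots> = w \<cdot> (v \<cdot> z)" using z u R' O' w vw by (intro assoc[symmetric]) simp_all
        finally show ?thesis using z H by simp
      qed
    qed (use z u R' H in \<open>simp_all add: assoc\<close>)
    show "\<exists>!z. z \<in> ar C \<and> dm C z = dm C p' \<and> cd C z = dm C u \<and> u \<cdot> z = p' \<and> v \<cdot> z = q'"
    proof (rule ex1I[of _ z])
      show "z \<in> ar C \<and> dm C z = dm C p' \<and> cd C z = dm C u \<and> u \<cdot> z = p' \<and> v \<cdot> z = q'"
        using z uz u R' H by simp
    next
      fix z' assume z': "z' \<in> ar C \<and> dm C z' = dm C p' \<and> cd C z' = dm C u \<and> u \<cdot> z' = p' \<and> v \<cdot> z' = q'"
      show "z' = z"
        apply (rule pb_uniq[OF O])
        using z' z u R' H by (simp_all add: assoc[symmetric])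
    qed
  qed (use R' O' sq u w vw uv in auto)
qed


lemma poT: assumes "is_pushout C m f n f'"
  shows "m \<in> ar C" "f \<in> ar C" "n \<in> ar C" "f' \<in> ar C"
     "dm C m = dm C f" "cd C f = dm C n" "cd C m = dm C f'" "cd C n = cd C f'"
  using assms unfolding is_pushout_def by blast+

lemma poE: assumes "is_pushout C m f n f'" shows "n \<cdot> f = f' \<cdot> m"
  using assms unfolding is_pushout_def by blast

lemma po_ex: assumes "is_pushout C m f n f'" "h \<in> ar C" "k \<in> ar C" "dm C h = cd C f"
  "dm C k = cd C m" "cd C h = cd C k" "h \<cdot> f = k \<cdot> m"
  obtains u where "u \<in> ar C" "dm C u = cd C n" "cd C u = cd C h" "u \<cdot> n = h" "u \<cdot> f' = k"
  using assms unfolding is_pushout_def by metis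

lemma po_uniq: assumes P: "is_pushout C m f n f'"
  and u: "u \<in> ar C" "dm C u = cd C n" and u': "u' \<in> ar C" "dm C u' = cd C n" "cd C u = cd C u'"
  and e: "u \<cdot> n = u' \<cdot> n" "u \<cdot> f' = u' \<cdot> f'"
  shows "u = u'"
proof -
  note T = poT[OF P]
  have sq: "(u \<cdot> n) \<cdot> f = (u \<cdot> f') \<cdot> m"
  proof -
    have "(u \<cdot> n) \<cdot> f = u \<cdot> (n \<cdot> f)" by (rule assoc[symmetric]) (use T u in simp_all)
    also have "\<dots> = u \<cdot> (f' \<cdot> m)" using poE[OF P] by simp
    also have "\<dots> = (u \<cdot> f') \<cdot> m" by (rule assoc) (use T u in simp_all)
    finally show ?thesis .
  qed
  define Q where "Q = (\<lambda>v. v \<in> ar C \<and> dm C v = cd C n \<and> cd C v = cd C (u \<cdot> n) \<and> v \<cdot> n = u \<cdot> n \<and> v \<cdot> f' = u \<cdot> f')"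
  have ex: "\<exists>!v. Q v"
    unfolding Q_def
    using P unfolding is_pushout_def
    apply (elim conjE) apply (erule allE[of _ "u \<cdot> n"], erule allE[of _ "u \<cdot> f'"])
    apply (erule mp)
    using T u sq by simp
  have "Q u" unfolding Q_def using u T by simp
  moreover have "Q u'" unfolding Q_def using u u' T e by simp
  ultimately show ?thesis using ex by blast
qed

lemma po_paste:
  assumes L: "is_pushout C m f n f'" and R: "is_pushout C n g p g'"
  shows "is_pushout C m (g \<cdot> f) p (g' \<cdot> f')"
proof -
  note L' = poT[OF L] and R' = poT[OF R]
  have sq: "p \<cdot> (g \<cdot> f) = (g' \<cdot> f') \<cdot> m"
  proof -
    have "p \<cdot> (g \<cdot> f) = g' \<cdot> (n \<cdot> f)" by (rule assoc_sq[OF poE[OF R]]) (use L' R' in simp_all)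
    also have "\<dots> = g' \<cdot> (f' \<cdot> m)" using poE[OF L] by simp
    also have "\<dots> = (g' \<cdot> f') \<cdot> m" by (rule assoc) (use L' R' in simp_all)
    finally show ?thesis .
  qed
  show ?thesis unfolding is_pushout_def
  proof (intro conjI allI impI)
    fix h k assume H: "h \<in> ar C \<and> k \<in> ar C \<and> dm C h = cd C (g \<cdot> f) \<and> dm C k = cd C m \<and>
      cd C h = cd C k \<and> h \<cdot> (g \<cdot> f) = k \<cdot> m"
    have HT: "h \<in> ar C" "k \<in> ar C" "dm C h = cd C g" "dm C k = cd C m" "cd C h = cd C k"
      using H L' R' by auto
    have H2: "(h \<cdot> g) \<cdot> f = k \<cdot> m"
    proof -
      have "(h \<cdot> g) \<cdot> f = h \<cdot> (g \<cdot> f)" by (rule assoc[symmetric]) (use HT L' R' in simp_all)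
      then show ?thesis using H by simp
    qed
    have hg: "h \<cdot> g \<in> ar C" "dm C (h \<cdot> g) = cd C f" "cd C (h \<cdot> g) = cd C k"
      using HT L' R' by simp_all
    obtain u1 where u1: "u1 \<in> ar C" "dm C u1 = cd C n" "cd C u1 = cd C (h \<cdot> g)" "u1 \<cdot> n = h \<cdot> g" "u1 \<cdot> f' = k"
      by (rule po_ex[OF L hg(1) HT(2) hg(2) HT(4) hg(3) H2]) blast
    have u1': "dm C h = cd C g" "cd C h = cd C u1" "h \<cdot> g = u1 \<cdot> n" using u1 HT hg by simp_all
    obtain u where u: "u \<in> ar C" "dm C u = cd C p" "cd C u = cd C h" "u \<cdot> p = h" "u \<cdot> g' = u1"
      by (rule po_ex[OF R HT(1) u1(1) u1'(1) u1(2) u1'(2) u1'(3)]) blast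
    show "\<exists>!u. u \<in> ar C \<and> dm C u = cd C p \<and> cd C u = cd C h \<and> u \<cdot> p = h \<and> u \<cdot> (g' \<cdot> f') = k"
    proof (rule ex1I[of _ u])
      have "u \<cdot> (g' \<cdot> f') = (u \<cdot> g') \<cdot> f'" by (rule assoc) (use L' R' u in simp_all)
      then show "u \<in> ar C \<and> dm C u = cd C p \<and> cd C u = cd C h \<and> u \<cdot> p = h \<and> u \<cdot> (g' \<cdot> f') = k"
        using u u1 by simp
    next
      fix u' assume U: "u' \<in> ar C \<and> dm C u' = cd C p \<and> cd C u' = cd C h \<and> u' \<cdot> p = h \<and> u' \<cdot> (g' \<cdot> f') = k"
      have UT: "u' \<in> ar C" "dm C u' = cd C p" "cd C u' = cd C h" using U by auto
      have e1: "(u' \<cdot> g') \<cdot> n = u1 \<cdot> n"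
      proof -
        have "(u' \<cdot> g') \<cdot> n = u' \<cdot> (g' \<cdot> n)" by (rule assoc[symmetric]) (use L' R' UT in simp_all)
        also have "\<dots> = u' \<cdot> (p \<cdot> g)" using poE[OF R] by simp
        also have "\<dots> = (u' \<cdot> p) \<cdot> g" by (rule assoc) (use L' R' UT in simp_all)
        finally show ?thesis using U u1 by simp
      qed
      have e2: "(u' \<cdot> g') \<cdot> f' = u1 \<cdot> f'"
      proof -
        have "(u' \<cdot> g') \<cdot> f' = u' \<cdot> (g' \<cdot> f')" by (rule assoc[symmetric]) (use L' R' UT in simp_all)
        then show ?thesis using U u1 by simp
      qed
      have t: "u' \<cdot> g' \<in> ar C" "dm C (u' \<cdot> g') = cd C n" "cd C (u' \<cdot> g') = cd C u1"
        using UT L' R' u1 hg HT by simp_all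
      have "u' \<cdot> g' = u1"
        by (rule po_uniq[OF L t(1) t(2) u1(1) u1(2) t(3) e1 e2])
      then have t2: "u' \<cdot> p = u \<cdot> p" "u' \<cdot> g' = u \<cdot> g'" "cd C u' = cd C u" using U u by simp_all
      show "u' = u"
        by (rule po_uniq[OF R UT(1) UT(2) u(1) u(2) t2(3) t2(1) t2(2)])
    qed
  qed (use L' R' sq in simp_all)
qed


lemma po_cancel:
  assumes L: "is_pushout C m f n f'" and O: "is_pushout C m (g \<cdot> f) p (g' \<cdot> f')"
    and sq: "p \<cdot> g = g' \<cdot> n" and g: "g \<in> ar C" "dm C g = cd C f"
    and g': "g' \<in> ar C" "dm C g' = cd C n"
  shows "is_pushout C n g p g'"
proof -
  note L' = poT[OF L] and O' = poT[OF O]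
  have T: "cd C g = dm C p" "cd C p = cd C g'" using O' L' g g' by simp_all
  show ?thesis unfolding is_pushout_def
  proof (intro conjI allI impI)
    fix h k assume H: "h \<in> ar C \<and> k \<in> ar C \<and> dm C h = cd C g \<and> dm C k = cd C n \<and>
      cd C h = cd C k \<and> h \<cdot> g = k \<cdot> n"
    have HT: "h \<in> ar C" "k \<in> ar C" "dm C h = cd C g" "dm C k = cd C n" "cd C h = cd C k"
      using H by auto
    have H2: "h \<cdot> (g \<cdot> f) = (k \<cdot> f') \<cdot> m"
    proof -
      have "h \<cdot> (g \<cdot> f) = k \<cdot> (n \<cdot> f)" by (rule assoc_sq) (use H HT L' g in simp_all)
      also have "\<dots> = k \<cdot> (f' \<cdot> m)" using poE[OF L] by simp
      also have "\<dots> = (k \<cdot> f') \<cdot> m" by (rule assoc) (use HT L' in simp_all)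
      finally show ?thesis .
    qed
    have kf: "k \<cdot> f' \<in> ar C" "dm C h = cd C (g \<cdot> f)" "dm C (k \<cdot> f') = cd C m" "cd C h = cd C (k \<cdot> f')"
      using HT L' g by simp_all
    obtain u where u: "u \<in> ar C" "dm C u = cd C p" "cd C u = cd C h" "u \<cdot> p = h" "u \<cdot> (g' \<cdot> f') = k \<cdot> f'"
      by (rule po_ex[OF O HT(1) kf(1) kf(2) kf(3) kf(4) H2]) blast
    have e1: "(u \<cdot> g') \<cdot> n = k \<cdot> n"
    proof -
      have "(u \<cdot> g') \<cdot> n = u \<cdot> (g' \<cdot> n)" by (rule assoc[symmetric]) (use L' u g' T in simp_all)
      also have "\<dots> = u \<cdot> (p \<cdot> g)" using sq by simp
      also have "\<dots> = (u \<cdot> p) \<cdot> g" by (rule assoc) (use L' u g T O' in simp_all)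
      finally show ?thesis using u H by simp
    qed
    have e2: "(u \<cdot> g') \<cdot> f' = k \<cdot> f'"
    proof -
      have "(u \<cdot> g') \<cdot> f' = u \<cdot> (g' \<cdot> f')" by (rule assoc[symmetric]) (use L' u g' T in simp_all)
      then show ?thesis using u by simp
    qed
    have t: "u \<cdot> g' \<in> ar C" "dm C (u \<cdot> g') = cd C n" "cd C (u \<cdot> g') = cd C k"
      using L' u g' T HT by simp_all
    have ug: "u \<cdot> g' = k"
      by (rule po_uniq[OF L t(1) t(2) HT(2) HT(4) t(3) e1 e2])
    show "\<exists>!u. u \<in> ar C \<and> dm C u = cd C p \<and> cd C u = cd C h \<and> u \<cdot> p = h \<and> u \<cdot> g' = k"
    proof (rule ex1I[of _ u])
      show "u \<in> ar C \<and> dm C u = cd C p \<and> cd C u = cd C h \<and> u \<cdot> p = h \<and> u \<cdot> g' = k"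
        using u ug by simp
    next
      fix u' assume U: "u' \<in> ar C \<and> dm C u' = cd C p \<and> cd C u' = cd C h \<and> u' \<cdot> p = h \<and> u' \<cdot> g' = k"
      have UT: "u' \<in> ar C" "dm C u' = cd C p" "cd C u' = cd C h" using U by auto
      have "u' \<cdot> (g' \<cdot> f') = (u' \<cdot> g') \<cdot> f'" by (rule assoc) (use L' UT g' T in simp_all)
      then have t2: "u' \<cdot> (g' \<cdot> f') = u \<cdot> (g' \<cdot> f')" "u' \<cdot> p = u \<cdot> p" "cd C u' = cd C u" using U u by simp_all
      show "u' = u"
        by (rule po_uniq[OF O UT(1) UT(2) u(1) u(2) t2(3) t2(2) t2(1)])
    qed
  qed (use L' O' sq g g' T in simp_all)
qed


lemma po_id: assumes "m \<in> ar C"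
  shows "is_pushout C m (idt C (dm C m)) m (idt C (cd C m))"
  unfolding is_pushout_def
proof (intro conjI allI impI)
  fix h k assume H: "h \<in> ar C \<and> k \<in> ar C \<and> dm C h = cd C (idt C (dm C m)) \<and> dm C k = cd C m \<and>
      cd C h = cd C k \<and> h \<cdot> idt C (dm C m) = k \<cdot> m"
  have HT: "h \<in> ar C" "k \<in> ar C" "dm C h = dm C m" "dm C k = cd C m" "cd C h = cd C k"
    using H assms by auto
  have "h \<cdot> idt C (dm C h) = h" using HT(1) by (rule idr)
  then have hk: "k \<cdot> m = h" using H HT by simp
  have kk: "k \<cdot> idt C (cd C m) = k" using idr[OF HT(2)] HT by simp
  show "\<exists>!u. u \<in> ar C \<and> dm C u = cd C m \<and> cd C u = cd C h \<and> u \<cdot> m = h \<and> u \<cdot> idt C (cd C m) = k"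
  proof (rule ex1I[of _ k])
    show "k \<in> ar C \<and> dm C k = cd C m \<and> cd C k = cd C h \<and> k \<cdot> m = h \<and> k \<cdot> idt C (cd C m) = k"
      using HT hk kk by simp
  next
    fix u assume U: "u \<in> ar C \<and> dm C u = cd C m \<and> cd C u = cd C h \<and> u \<cdot> m = h \<and> u \<cdot> idt C (cd C m) = k"
    have "u \<cdot> idt C (dm C u) = u" using U by (intro idr) simp
    then show "u = k" using U by simp
  qed
qed (use assms in simp_all)


lemma pbT: assumes "is_pullback C f g p q"
  shows "f \<in> ar C" "g \<in> ar C" "p \<in> ar C" "q \<in> ar C"
     "cd C f = cd C g" "dm C p = dm C q" "cd C p = dm C f" "cd C q = dm C g"
  using pbD[OF assms] by blast+

lemma fpc_pb: "is_FPC C f m n g \<Longrightarrow> is_pullback C m g f n"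
  unfolding is_FPC_def by blast

lemma fpc_ex: assumes "is_FPC C f m n g" "is_pullback C m w u v" "t \<in> ar C" "dm C t = dm C u"
  "cd C t = dm C f" "f \<cdot> t = u"
  obtains y where "y \<in> ar C" "dm C y = cd C v" "cd C y = dm C g" "g \<cdot> y = w" "y \<cdot> v = n \<cdot> t"
  using assms unfolding is_FPC_def by metis

lemma fpc_uniq: assumes F: "is_FPC C f m n g" and P: "is_pullback C m w u v" and t: "t \<in> ar C" "dm C t = dm C u"
  "cd C t = dm C f" "f \<cdot> t = u"
  and y: "y \<in> ar C" "dm C y = cd C v" "cd C y = dm C g" "g \<cdot> y = w" "y \<cdot> v = n \<cdot> t"
  and y': "y' \<in> ar C" "dm C y' = cd C v" "cd C y' = dm C g" "g \<cdot> y' = w" "y' \<cdot> v = n \<cdot> t"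
  shows "y = y'"
proof -
  define Q where "Q = (\<lambda>y. y \<in> ar C \<and> dm C y = cd C v \<and> cd C y = dm C g \<and> g \<cdot> y = w \<and> y \<cdot> v = n \<cdot> t)"
  have "\<exists>!y. Q y" unfolding Q_def using F P t unfolding is_FPC_def by blast
  moreover have "Q y" "Q y'" unfolding Q_def using y y' by blast+
  ultimately show ?thesis by blast
qed

lemma fpc_id: assumes m: "m \<in> ar C"
  shows "is_FPC C (idt C (dm C m)) m m (idt C (cd C m))"
proof -
  have pb: "is_pullback C m (idt C (cd C m)) (idt C (dm C m)) m"
    unfolding is_pullback_def
  proof (intro conjI allI impI)
    fix p' q' assume H: "p' \<in> ar C \<and> q' \<in> ar C \<and> dm C p' = dm C q' \<and> cd C p' = dm C m \<and>
        cd C q' = dm C (idt C (cd C m)) \<and> m \<cdot> p' = idt C (cd C m) \<cdot> q'"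
    have HT: "p' \<in> ar C" "q' \<in> ar C" "dm C p' = dm C q'" "cd C p' = dm C m" "cd C q' = cd C m"
      using H m by auto
    have q1: "idt C (cd C q') \<cdot> q' = q'" using HT(2) by (rule idl)
    have p1: "idt C (cd C p') \<cdot> p' = p'" using HT(1) by (rule idl)
    have mq: "m \<cdot> p' = q'" using H q1 HT by simp
    show "\<exists>!u. u \<in> ar C \<and> dm C u = dm C p' \<and> cd C u = dm C (idt C (dm C m)) \<and>
        idt C (dm C m) \<cdot> u = p' \<and> m \<cdot> u = q'"
    proof (rule ex1I[of _ p'])
      show "p' \<in> ar C \<and> dm C p' = dm C p' \<and> cd C p' = dm C (idt C (dm C m)) \<and>
        idt C (dm C m) \<cdot> p' = p' \<and> m \<cdot> p' = q'" using HT p1 mq m by simp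
    next
      fix u assume U: "u \<in> ar C \<and> dm C u = dm C p' \<and> cd C u = dm C (idt C (dm C m)) \<and>
        idt C (dm C m) \<cdot> u = p' \<and> m \<cdot> u = q'"
      have "idt C (cd C u) \<cdot> u = u" using U by (intro idl) simp
      then show "u = p'" using U m by simp
    qed
  next
    show "m \<cdot> idt C (dm C m) = idt C (cd C m) \<cdot> m" using m by simp
  qed (use m in simp_all)
  show ?thesis unfolding is_FPC_def
  proof (intro conjI allI impI)
    fix u v w t assume H: "is_pullback C m w u v \<and> t \<in> ar C \<and> dm C t = dm C u \<and>
       cd C t = dm C (idt C (dm C m)) \<and> idt C (dm C m) \<cdot> t = u"
    then have P: "is_pullback C m w u v" and t: "t \<in> ar C" "cd C t = dm C m" using m by auto
    have tu: "t = u" using H t idl[OF t(1)] by simp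
    note PT = pbT[OF P]
    show "\<exists>!y. y \<in> ar C \<and> dm C y = cd C v \<and> cd C y = dm C (idt C (cd C m)) \<and>
        idt C (cd C m) \<cdot> y = w \<and> y \<cdot> v = m \<cdot> t"
    proof (rule ex1I[of _ w])
      show "w \<in> ar C \<and> dm C w = cd C v \<and> cd C w = dm C (idt C (cd C m)) \<and>
        idt C (cd C m) \<cdot> w = w \<and> w \<cdot> v = m \<cdot> t"
        using PT m tu pbD(9)[OF P] idl[OF PT(2)] by simp
    next
      fix y assume Y: "y \<in> ar C \<and> dm C y = cd C v \<and> cd C y = dm C (idt C (cd C m)) \<and>
        idt C (cd C m) \<cdot> y = w \<and> y \<cdot> v = m \<cdot> t"
      have "idt C (cd C y) \<cdot> y = y" using Y by (intro idl) simp
      then show "y = w" using Y m by simp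
    qed
  qed (rule pb)
qed


lemma fpc_paste:
  assumes F1: "is_FPC C f n m f'" and F2: "is_FPC C g p n g'"
  shows "is_FPC C (g \<cdot> f) p m (g' \<cdot> f')"
proof -
  note P1 = fpc_pb[OF F1] and P2 = fpc_pb[OF F2]
  note T1 = pbT[OF P1] and T2 = pbT[OF P2]
  have pb: "is_pullback C p (g' \<cdot> f') (g \<cdot> f) m" by (rule pb_paste[OF P2 P1])
  show ?thesis unfolding is_FPC_def
  proof (intro conjI allI impI)
    fix u v w t assume H: "is_pullback C p w u v \<and> t \<in> ar C \<and> dm C t = dm C u \<and>
       cd C t = dm C (g \<cdot> f) \<and> (g \<cdot> f) \<cdot> t = u"
    then have P: "is_pullback C p w u v" and t: "t \<in> ar C" "dm C t = dm C u" "cd C t = dm C f"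
      and tu: "(g \<cdot> f) \<cdot> t = u" using T1 T2 by auto
    note PT = pbT[OF P]
    have ft: "f \<cdot> t \<in> ar C" "dm C (f \<cdot> t) = dm C u" "cd C (f \<cdot> t) = dm C g"
      using t T1 T2 by simp_all
    have gft: "g \<cdot> (f \<cdot> t) = u" using tu assoc[of t f g] t T1 T2 by simp
    obtain y1 where y1: "y1 \<in> ar C" "dm C y1 = cd C v" "cd C y1 = dm C g'" "g' \<cdot> y1 = w" "y1 \<cdot> v = n \<cdot> (f \<cdot> t)"
      by (rule fpc_ex[OF F2 P ft(1) ft(2) ft(3) gft]) blast
    have O: "is_pullback C p (g' \<cdot> y1) (g \<cdot> (f \<cdot> t)) v" using P y1(4) gft by simp
    have P': "is_pullback C n y1 (f \<cdot> t) v"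
      by (rule pb_cancel[OF P2 O]) (use y1 ft T1 T2 in simp_all)
    have ftr: "f \<cdot> t = f \<cdot> t" ..
    obtain y where y: "y \<in> ar C" "dm C y = cd C v" "cd C y = dm C f'" "f' \<cdot> y = y1" "y \<cdot> v = m \<cdot> t"
      by (rule fpc_ex[OF F1 P' t(1) _ t(3) ftr]) (use ft t in simp_all)
    show "\<exists>!y. y \<in> ar C \<and> dm C y = cd C v \<and> cd C y = dm C (g' \<cdot> f') \<and> (g' \<cdot> f') \<cdot> y = w \<and> y \<cdot> v = m \<cdot> t"
    proof (rule ex1I[of _ y])
      have "(g' \<cdot> f') \<cdot> y = g' \<cdot> (f' \<cdot> y)" by (rule assoc[symmetric]) (use y T1 T2 in simp_all)
      then show "y \<in> ar C \<and> dm C y = cd C v \<and> cd C y = dm C (g' \<cdot> f') \<and> (g' \<cdot> f') \<cdot> y = w \<and> y \<cdot> v = m \<cdot> t"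
        using y y1 T1 T2 by simp
    next
      fix y' assume Y: "y' \<in> ar C \<and> dm C y' = cd C v \<and> cd C y' = dm C (g' \<cdot> f') \<and> (g' \<cdot> f') \<cdot> y' = w \<and> y' \<cdot> v = m \<cdot> t"
      have YT: "y' \<in> ar C" "dm C y' = cd C v" "cd C y' = dm C f'" using Y T1 T2 by auto
      have a1: "g' \<cdot> (f' \<cdot> y') = w"
      proof -
        have "g' \<cdot> (f' \<cdot> y') = (g' \<cdot> f') \<cdot> y'" by (rule assoc) (use YT T1 T2 in simp_all)
        then show ?thesis using Y by simp
      qed
      have a2: "(f' \<cdot> y') \<cdot> v = n \<cdot> (f \<cdot> t)"
      proof -
        have "(f' \<cdot> y') \<cdot> v = f' \<cdot> (y' \<cdot> v)" by (rule assoc[symmetric]) (use YT T1 T2 PT in simp_all)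
        also have "\<dots> = f' \<cdot> (m \<cdot> t)" using Y by simp
        also have "\<dots> = n \<cdot> (f \<cdot> t)" by (rule assoc_sq[OF pbD(9)[OF P1, symmetric]]) (use t T1 in simp_all)
        finally show ?thesis .
      qed
      have a3: "f' \<cdot> y' \<in> ar C" "dm C (f' \<cdot> y') = cd C v" "cd C (f' \<cdot> y') = dm C g'" using YT T1 T2 by simp_all
      have "f' \<cdot> y' = y1"
        by (rule fpc_uniq[OF F2 P ft(1) ft(2) ft(3) gft a3(1) a3(2) a3(3) a1 a2 y1])
      then have a4: "f' \<cdot> y' = y1" .
      show "y' = y"
        by (rule fpc_uniq[OF F1 P' t(1) _ t(3) ftr YT a4 _ y]) (use ft t Y in simp_all)
    qed
  qed (rule pb)
qed

lemma fpc_cancel: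
  assumes Fp: "is_FPC C f e n f'" and Fs: "is_FPC C (f \<cdot> g) e q (f' \<cdot> y)"
    and y: "y \<in> ar C" "dm C y = cd C q" "cd C y = dm C f'" and sq: "y \<cdot> q = n \<cdot> g"
    and g: "g \<in> ar C" "cd C g = dm C f"
  shows "is_FPC C g n q y"
proof -
  note Pp = fpc_pb[OF Fp] and Ps = fpc_pb[OF Fs]
  note Tp = pbT[OF Pp] and Ts = pbT[OF Ps]
  have pb: "is_pullback C n y g q"
    by (rule pb_cancel[OF Pp Ps sq[symmetric]]) (use g y Tp Ts in simp_all)
  show ?thesis unfolding is_FPC_def
  proof (intro conjI allI impI)
    fix u v w t assume H: "is_pullback C n w u v \<and> t \<in> ar C \<and> dm C t = dm C u \<and>
       cd C t = dm C g \<and> g \<cdot> t = u"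
    then have P: "is_pullback C n w u v" and t: "t \<in> ar C" "dm C t = dm C u" "cd C t = dm C g"
      and tu: "g \<cdot> t = u" by auto
    note PT = pbT[OF P]
    have Pc: "is_pullback C e (f' \<cdot> w) (f \<cdot> u) v" by (rule pb_paste[OF Pp P])
    have fgt: "(f \<cdot> g) \<cdot> t = f \<cdot> u"
      using assoc[of t g f, symmetric] t g Tp tu by simp
    have tT: "dm C t = dm C (f \<cdot> u)" "cd C t = dm C (f \<cdot> g)" using t PT Tp g by simp_all
    obtain z where z: "z \<in> ar C" "dm C z = cd C v" "cd C z = dm C (f' \<cdot> y)" "(f' \<cdot> y) \<cdot> z = f' \<cdot> w" "z \<cdot> v = q \<cdot> t"
      by (rule fpc_ex[OF Fs Pc t(1) tT fgt]) blast
    have zT: "cd C z = dm C y" using z y Tp by simp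
    have fu: "f \<cdot> u = f \<cdot> u" ..
    have uT: "u \<in> ar C" "dm C u = dm C (f \<cdot> u)" "cd C u = dm C f" using PT Tp by simp_all
    have b1: "f' \<cdot> (y \<cdot> z) = f' \<cdot> w"
    proof -
      have "f' \<cdot> (y \<cdot> z) = (f' \<cdot> y) \<cdot> z" by (rule assoc) (use z zT y Tp in simp_all)
      then show ?thesis using z by simp
    qed
    have b2: "(y \<cdot> z) \<cdot> v = n \<cdot> u"
    proof -
      have "(y \<cdot> z) \<cdot> v = y \<cdot> (z \<cdot> v)" by (rule assoc[symmetric]) (use z zT y Tp PT in simp_all)
      also have "\<dots> = y \<cdot> (q \<cdot> t)" using z by simp
      also have "\<dots> = n \<cdot> (g \<cdot> t)" by (rule assoc_sq[OF sq]) (use y t g Tp Ts in simp_all)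
      finally show ?thesis using tu by simp
    qed
    have b3: "y \<cdot> z \<in> ar C" "dm C (y \<cdot> z) = cd C v" "cd C (y \<cdot> z) = dm C f'" using z zT y by simp_all
    have b4: "w \<in> ar C" "dm C w = cd C v" "cd C w = dm C f'" "f' \<cdot> w = f' \<cdot> w" "w \<cdot> v = n \<cdot> u"
      using PT Tp pbD(9)[OF P] by simp_all
    have yz: "y \<cdot> z = w"
      by (rule fpc_uniq[OF Fp Pc uT fu b3 b1 b2 b4])
    show "\<exists>!z. z \<in> ar C \<and> dm C z = cd C v \<and> cd C z = dm C y \<and> y \<cdot> z = w \<and> z \<cdot> v = q \<cdot> t"
    proof (rule ex1I[of _ z])
      show "z \<in> ar C \<and> dm C z = cd C v \<and> cd C z = dm C y \<and> y \<cdot> z = w \<and> z \<cdot> v = q \<cdot> t"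
        using z zT yz by simp
    next
      fix z' assume Z: "z' \<in> ar C \<and> dm C z' = cd C v \<and> cd C z' = dm C y \<and> y \<cdot> z' = w \<and> z' \<cdot> v = q \<cdot> t"
      have ZT: "z' \<in> ar C" "dm C z' = cd C v" "cd C z' = dm C (f' \<cdot> y)" using Z y Tp by simp_all
      have c1: "(f' \<cdot> y) \<cdot> z' = f' \<cdot> w"
      proof -
        have "(f' \<cdot> y) \<cdot> z' = f' \<cdot> (y \<cdot> z')" by (rule assoc[symmetric]) (use Z y Tp in simp_all)
        then show ?thesis using Z by simp
      qed
      have c2: "z' \<cdot> v = q \<cdot> t" using Z by simp
      show "z' = z"
        by (rule fpc_uniq[OF Fs Pc t(1) tT fgt ZT c1 c2 z])
    qed
  qed (rule pb)
qed


definition quadcat :: "'a set \<Rightarrow> ('a \<Rightarrow> 'a \<Rightarrow> 'a \<Rightarrow> 'a \<Rightarrow> bool) \<Rightarrow> ('a, 'a \<times> 'a \<times> 'a \<times> 'a) category" where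
  "quadcat M Q = \<lparr> ob = M,
     ar = {(m, n, f, f'). m \<in> M \<and> n \<in> M \<and> Q m n f f'},
     dm = (\<lambda>(m, n, f, f'). m),
     cd = (\<lambda>(m, n, f, f'). n),
     idt = (\<lambda>m. (m, m, idt C (dm C m), idt C (cd C m))),
     cmp = (\<lambda>(n, p, g, g') (m, n', f, f'). (m, p, cmp C g f, cmp C g' f')) \<rparr>"

lemma quadcat_cat:
  assumes MA: "M \<subseteq> ar C"
    and Qid: "\<And>m. m \<in> M \<Longrightarrow> Q m m (idt C (dm C m)) (idt C (cd C m))"
    and Qcomp: "\<And>m n p f f' g g'. m \<in> M \<Longrightarrow> n \<in> M \<Longrightarrow> p \<in> M \<Longrightarrow> Q m n f f' \<Longrightarrow> Q n p g g' \<Longrightarrow> Q m p (g \<cdot> f) (g' \<cdot> f')"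
    and QT: "\<And>m n f f'. m \<in> M \<Longrightarrow> n \<in> M \<Longrightarrow> Q m n f f' \<Longrightarrow> f \<in> ar C \<and> f' \<in> ar C \<and> dm C f = dm C m \<and> cd C f = dm C n \<and>
       dm C f' = cd C m \<and> cd C f' = cd C n"
  shows "is_category (quadcat M Q)" "is_functor (quadcat M Q) C (dm C) dom_ar"
proof -
  have arE: "x \<in> ar (quadcat M Q) \<longleftrightarrow> (\<exists>m n f f'. x = (m, n, f, f') \<and> m \<in> M \<and> n \<in> M \<and> Q m n f f')" for x
    unfolding quadcat_def by auto
  have [simp]: "ob (quadcat M Q) = M" "dm (quadcat M Q) (m, n, f, f') = m" "cd (quadcat M Q) (m, n, f, f') = n"
    "idt (quadcat M Q) m = (m, m, idt C (dm C m), idt C (cd C m))"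
    "cmp (quadcat M Q) (n, p, g, g') (m, n', f, f') = (m, p, g \<cdot> f, g' \<cdot> f')" for m n p f f' g g' n'
    unfolding quadcat_def by simp_all
  show "is_category (quadcat M Q)"
    unfolding is_category_def
  proof (intro conjI allI ballI impI)
    fix x assume "x \<in> ar (quadcat M Q)"
    then obtain m n f f' where x: "x = (m, n, f, f')" "m \<in> M" "n \<in> M" "Q m n f f'" using arE by blast
    show "dm (quadcat M Q) x \<in> ob (quadcat M Q)" "cd (quadcat M Q) x \<in> ob (quadcat M Q)" using x by simp_all
    have T: "f \<in> ar C" "f' \<in> ar C" "dm C f = dm C m" "cd C f = dm C n" "dm C f' = cd C m" "cd C f' = cd C n"
      using QT[OF x(2-4)] by auto
    have "idt C (cd C f) \<cdot> f = f" "idt C (cd C f') \<cdot> f' = f'" using idl[OF T(1)] idl[OF T(2)] by this+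
    then show "cmp (quadcat M Q) (idt (quadcat M Q) (cd (quadcat M Q) x)) x = x"
      using x T by simp
    have "f \<cdot> idt C (dm C f) = f" "f' \<cdot> idt C (dm C f') = f'" using idr[OF T(1)] idr[OF T(2)] by this+
    then show "cmp (quadcat M Q) x (idt (quadcat M Q) (dm (quadcat M Q) x)) = x"
      using x T by simp
  next
    fix a assume a: "a \<in> ob (quadcat M Q)"
    then show "idt (quadcat M Q) a \<in> ar (quadcat M Q)" using Qid[of a] arE by simp
    show "dm (quadcat M Q) (idt (quadcat M Q) a) = a" "cd (quadcat M Q) (idt (quadcat M Q) a) = a" by simp_all
  next
    fix x y assume H: "x \<in> ar (quadcat M Q) \<and> y \<in> ar (quadcat M Q) \<and> cd (quadcat M Q) x = dm (quadcat M Q) y"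
    then obtain m n f f' where x: "x = (m, n, f, f')" "m \<in> M" "n \<in> M" "Q m n f f'" using arE by blast
    obtain n2 p g g' where y: "y = (n2, p, g, g')" "n2 \<in> M" "p \<in> M" "Q n2 p g g'" using H arE by blast
    have n2: "n2 = n" using H x y by simp
    show "cmp (quadcat M Q) y x \<in> ar (quadcat M Q)" using x y n2 Qcomp[of m n p f f' g g'] arE by simp
    show "dm (quadcat M Q) (cmp (quadcat M Q) y x) = dm (quadcat M Q) x"
      "cd (quadcat M Q) (cmp (quadcat M Q) y x) = cd (quadcat M Q) y" using x y n2 by simp_all
  next
    fix x y z assume H: "x \<in> ar (quadcat M Q) \<and> y \<in> ar (quadcat M Q) \<and> z \<in> ar (quadcat M Q) \<and>
      cd (quadcat M Q) x = dm (quadcat M Q) y \<and> cd (quadcat M Q) y = dm (quadcat M Q) z"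
    then obtain m n f f' where x: "x = (m, n, f, f')" "m \<in> M" "n \<in> M" "Q m n f f'" using arE by blast
    obtain n2 p g g' where y: "y = (n2, p, g, g')" "n2 \<in> M" "p \<in> M" "Q n2 p g g'" using H arE by blast
    obtain p2 r h h' where z: "z = (p2, r, h, h')" "p2 \<in> M" "r \<in> M" "Q p2 r h h'" using H arE by blast
    have n2: "n2 = n" and p2: "p2 = p" using H x y z by simp_all
    have T1: "f \<in> ar C" "f' \<in> ar C" "cd C f = dm C n" "cd C f' = cd C n"
      using QT[OF x(2-4)] by auto
    have T2: "g \<in> ar C" "g' \<in> ar C" "dm C g = dm C n" "cd C g = dm C p" "dm C g' = cd C n" "cd C g' = cd C p"
      using QT[OF y(2-4)] n2 by auto
    have T3: "h \<in> ar C" "h' \<in> ar C" "dm C h = dm C p" "dm C h' = cd C p"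
      using QT[OF z(2-4)] p2 by auto
    have "h \<cdot> (g \<cdot> f) = (h \<cdot> g) \<cdot> f" by (rule assoc) (use T1 T2 T3 in simp_all)
    moreover have "h' \<cdot> (g' \<cdot> f') = (h' \<cdot> g') \<cdot> f'" by (rule assoc) (use T1 T2 T3 in simp_all)
    ultimately show "cmp (quadcat M Q) z (cmp (quadcat M Q) y x) = cmp (quadcat M Q) (cmp (quadcat M Q) z y) x"
      using x y z by simp
  qed
  show "is_functor (quadcat M Q) C (dm C) dom_ar"
    unfolding is_functor_def
  proof (intro conjI allI ballI impI)
    fix a assume "a \<in> ob (quadcat M Q)"
    then show "dm C a \<in> ob C" "dom_ar (idt (quadcat M Q) a) = idt C (dm C a)"
      using MA by (auto simp: dom_ar_def)
  next
    fix x assume "x \<in> ar (quadcat M Q)"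
    then obtain m n f f' where x: "x = (m, n, f, f')" "m \<in> M" "n \<in> M" "Q m n f f'" using arE by blast
    show "dom_ar x \<in> ar C" "dm C (dom_ar x) = dm C (dm (quadcat M Q) x)" "cd C (dom_ar x) = dm C (cd (quadcat M Q) x)"
      using QT[OF x(2-4)] x by (simp_all add: dom_ar_def)
  next
    fix x y assume H: "x \<in> ar (quadcat M Q) \<and> y \<in> ar (quadcat M Q) \<and> cd (quadcat M Q) x = dm (quadcat M Q) y"
    then obtain m n f f' where x: "x = (m, n, f, f')" using arE by blast
    obtain n2 p g g' where y: "y = (n2, p, g, g')" using H arE by blast
    show "dom_ar (cmp (quadcat M Q) y x) = dom_ar y \<cdot> dom_ar x" using x y by (simp add: dom_ar_def)
  qed
qed


lemma PO_h_simps: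
  "(a, b, c, d) \<in> ar (PO_h C M) \<longleftrightarrow> a \<in> M \<and> b \<in> M \<and> is_pushout C a c b d"
  "dm (PO_h C M) (a, b, c, d) = a" "cd (PO_h C M) (a, b, c, d) = b"
  "cmp (PO_h C M) (n, p, g, g') (m, n', f, f') = (m, p, g \<cdot> f, g' \<cdot> f')"
  unfolding PO_h_def by simp_all

lemma FPC_h_simps:
  "(a, b, c, d) \<in> ar (FPC_h C M) \<longleftrightarrow> a \<in> M \<and> b \<in> M \<and> is_FPC C c b a d"
  "dm (FPC_h C M) (a, b, c, d) = a" "cd (FPC_h C M) (a, b, c, d) = b"
  "cmp (FPC_h C M) (n, p, g, g') (m, n', f, f') = (m, p, g \<cdot> f, g' \<cdot> f')"
  unfolding FPC_h_def by simp_all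

lemma po_opcart: assumes L: "is_pushout C e f n f'" and eM: "e \<in> M" and nM: "n \<in> M"
  shows "opcartesian (PO_h C M) C dom_ar (e, n, f, f')"
  unfolding opcartesian_def
proof (intro conjI allI impI)
  show "(e, n, f, f') \<in> ar (PO_h C M)" using assms by (simp add: PO_h_simps)
  note LT = poT[OF L]
  fix \<psi> g assume H: "\<psi> \<in> ar (PO_h C M) \<and> dm (PO_h C M) \<psi> = dm (PO_h C M) (e, n, f, f') \<and> g \<in> ar C \<and>
    dm C g = cd C (dom_ar (e, n, f, f')) \<and> cd C g = cd C (dom_ar \<psi>) \<and> g \<cdot> dom_ar (e, n, f, f') = dom_ar \<psi>"
  obtain e2 p h h' where psi: "\<psi> = (e2, p, h, h')" by (cases \<psi>)
  have e2: "e2 = e" using H psi by (simp add: PO_h_simps)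
  have O: "is_pushout C e h p h'" and pM: "p \<in> M" using H psi e2 by (simp_all add: PO_h_simps)
  have g: "g \<in> ar C" "dm C g = cd C f" "cd C g = cd C h" and gfh: "g \<cdot> f = h"
    using H psi by (simp_all add: dom_ar_def)
  note OT = poT[OF O]
  have pg: "p \<cdot> g \<in> ar C" "dm C (p \<cdot> g) = cd C f" "cd C (p \<cdot> g) = cd C h'" using g OT by simp_all
  have sq0: "(p \<cdot> g) \<cdot> f = h' \<cdot> e"
  proof -
    have "(p \<cdot> g) \<cdot> f = p \<cdot> (g \<cdot> f)" by (rule assoc[symmetric]) (use g OT LT in simp_all)
    then show ?thesis using gfh poE[OF O] by simp
  qed
  obtain u where u: "u \<in> ar C" "dm C u = cd C n" "cd C u = cd C (p \<cdot> g)" "u \<cdot> n = p \<cdot> g" "u \<cdot> f' = h'"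
    by (rule po_ex[OF L pg(1) OT(4) pg(2) OT(7)[symmetric] pg(3) sq0]) blast
  have O': "is_pushout C e (g \<cdot> f) p (u \<cdot> f')" using O gfh u(5) by simp
  have R: "is_pushout C n g p u"
    by (rule po_cancel[OF L O' u(4)[symmetric] g(1) g(2) u(1) u(2)])
  show "\<exists>!\<chi>. \<chi> \<in> ar (PO_h C M) \<and> dm (PO_h C M) \<chi> = cd (PO_h C M) (e, n, f, f') \<and>
       cd (PO_h C M) \<chi> = cd (PO_h C M) \<psi> \<and> cmp (PO_h C M) \<chi> (e, n, f, f') = \<psi> \<and> dom_ar \<chi> = g"
  proof (rule ex1I[of _ "(n, p, g, u)"])
    show "(n, p, g, u) \<in> ar (PO_h C M) \<and> dm (PO_h C M) (n, p, g, u) = cd (PO_h C M) (e, n, f, f') \<and>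
       cd (PO_h C M) (n, p, g, u) = cd (PO_h C M) \<psi> \<and> cmp (PO_h C M) (n, p, g, u) (e, n, f, f') = \<psi> \<and> dom_ar (n, p, g, u) = g"
      using R nM pM psi e2 gfh u(5) by (simp add: PO_h_simps dom_ar_def)
  next
    fix \<chi> assume X: "\<chi> \<in> ar (PO_h C M) \<and> dm (PO_h C M) \<chi> = cd (PO_h C M) (e, n, f, f') \<and>
       cd (PO_h C M) \<chi> = cd (PO_h C M) \<psi> \<and> cmp (PO_h C M) \<chi> (e, n, f, f') = \<psi> \<and> dom_ar \<chi> = g"
    obtain a b c d where chi: "\<chi> = (a, b, c, d)" by (cases \<chi>)
    have abc: "a = n" "b = p" "c = g" using X chi psi by (simp_all add: PO_h_simps dom_ar_def)
    have R2: "is_pushout C n g p d" using X chi abc psi by (simp add: PO_h_simps)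
    have df: "d \<cdot> f' = h'" using X chi psi by (simp add: PO_h_simps)
    note R2T = poT[OF R2]
    have e1: "d \<cdot> n = u \<cdot> n" using poE[OF R2] u(4) by simp
    have e2': "d \<cdot> f' = u \<cdot> f'" using df u(5) by simp
    have c1: "cd C d = cd C u" using R2T u OT by simp
    have "d = u" by (rule po_uniq[OF L R2T(4) R2T(7)[symmetric] u(1) u(2) c1 e1 e2'])
    then show "\<chi> = (n, p, g, u)" using chi abc by simp
  qed
qed

lemma fpc_cart: assumes Fp: "is_FPC C f e n f'" and eM: "e \<in> M" and nM: "n \<in> M"
  shows "cartesian (FPC_h C M) C dom_ar (n, e, f, f')"
  unfolding cartesian_def
proof (intro conjI allI impI)
  show "(n, e, f, f') \<in> ar (FPC_h C M)" using assms by (simp add: FPC_h_simps)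
  note Pp = fpc_pb[OF Fp]
  note Tp = pbT[OF Pp]
  fix \<psi> g assume H: "\<psi> \<in> ar (FPC_h C M) \<and> cd (FPC_h C M) \<psi> = cd (FPC_h C M) (n, e, f, f') \<and> g \<in> ar C \<and>
    cd C g = dm C (dom_ar (n, e, f, f')) \<and> dm C g = dm C (dom_ar \<psi>) \<and> dom_ar (n, e, f, f') \<cdot> g = dom_ar \<psi>"
  obtain q e2 h h' where psi: "\<psi> = (q, e2, h, h')" by (cases \<psi>)
  have e2: "e2 = e" using H psi by (simp add: FPC_h_simps)
  have Fs: "is_FPC C h e q h'" and qM: "q \<in> M" using H psi e2 by (simp_all add: FPC_h_simps)
  have g: "g \<in> ar C" "cd C g = dm C f" "dm C g = dm C h" and fgh: "f \<cdot> g = h"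
    using H psi by (simp_all add: dom_ar_def)
  note Ps = fpc_pb[OF Fs]
  note Ts = pbT[OF Ps]
  obtain y where y: "y \<in> ar C" "dm C y = cd C q" "cd C y = dm C f'" "f' \<cdot> y = h'" "y \<cdot> q = n \<cdot> g"
    by (rule fpc_ex[OF Fp Ps g(1) g(3) g(2) fgh]) blast
  have Fs': "is_FPC C (f \<cdot> g) e q (f' \<cdot> y)" using Fs fgh y(4) by simp
  have Fc: "is_FPC C g n q y" by (rule fpc_cancel[OF Fp Fs' y(1) y(2) y(3) y(5) g(1) g(2)])
  show "\<exists>!\<chi>. \<chi> \<in> ar (FPC_h C M) \<and> dm (FPC_h C M) \<chi> = dm (FPC_h C M) \<psi> \<and>
       cd (FPC_h C M) \<chi> = dm (FPC_h C M) (n, e, f, f') \<and> cmp (FPC_h C M) (n, e, f, f') \<chi> = \<psi> \<and> dom_ar \<chi> = g"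
  proof (rule ex1I[of _ "(q, n, g, y)"])
    show "(q, n, g, y) \<in> ar (FPC_h C M) \<and> dm (FPC_h C M) (q, n, g, y) = dm (FPC_h C M) \<psi> \<and>
       cd (FPC_h C M) (q, n, g, y) = dm (FPC_h C M) (n, e, f, f') \<and> cmp (FPC_h C M) (n, e, f, f') (q, n, g, y) = \<psi> \<and> dom_ar (q, n, g, y) = g"
      using Fc nM qM psi e2 fgh y(4) by (simp add: FPC_h_simps dom_ar_def)
  next
    fix \<chi> assume X: "\<chi> \<in> ar (FPC_h C M) \<and> dm (FPC_h C M) \<chi> = dm (FPC_h C M) \<psi> \<and>
       cd (FPC_h C M) \<chi> = dm (FPC_h C M) (n, e, f, f') \<and> cmp (FPC_h C M) (n, e, f, f') \<chi> = \<psi> \<and> dom_ar \<chi> = g"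
    obtain a b c d where chi: "\<chi> = (a, b, c, d)" by (cases \<chi>)
    have abc: "a = q" "b = n" "c = g" using X chi psi by (simp_all add: FPC_h_simps dom_ar_def)
    have F2: "is_FPC C g n q d" using X chi abc psi by (simp add: FPC_h_simps)
    have df: "f' \<cdot> d = h'" using X chi psi by (simp add: FPC_h_simps)
    note T2 = pbT[OF fpc_pb[OF F2]]
    have d: "d \<in> ar C" "dm C d = cd C q" "cd C d = dm C f'" "f' \<cdot> d = h'" "d \<cdot> q = n \<cdot> g"
      using T2 Tp df pbD(9)[OF fpc_pb[OF F2]] by simp_all
    have "d = y" by (rule fpc_uniq[OF Fp Ps g(1) g(3) g(2) fgh d y])
    then show "\<chi> = (q, n, g, y)" using chi abc by simp
  qed
qed

end

theorem mainTheorem8: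
  fixes C :: "('o, 'a) category" and M :: "'a set"
  assumes "is_category C" and "stable_system C M"
  shows "(has_pushouts_along C M \<longrightarrow> opfibration (PO_h C M) C (dm C) dom_ar) \<and>
         (has_FPCs_along C M \<longrightarrow> fibration (FPC_h C M) C (dm C) dom_ar)"
proof -
  interpret cat C by (rule cat.intro) (rule assms(1))
  have MA: "M \<subseteq> ar C" and Mpb: "\<And>m g p q. m \<in> M \<Longrightarrow> is_pullback C m g p q \<Longrightarrow> q \<in> M"
    using assms(2) unfolding stable_system_def by blast+
  have PO_eq: "PO_h C M = quadcat M (\<lambda>m n f f'. is_pushout C m f n f')"
    unfolding PO_h_def quadcat_def by simp
  have FPC_eq: "FPC_h C M = quadcat M (\<lambda>m n f f'. is_FPC C f n m f')"
    unfolding FPC_h_def quadcat_def by simp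
  have q1: "\<And>m. m \<in> M \<Longrightarrow> is_pushout C m (idt C (dm C m)) m (idt C (cd C m))"
    using po_id MA by blast
  have q2: "\<And>m n p f f' g g'. m \<in> M \<Longrightarrow> n \<in> M \<Longrightarrow> p \<in> M \<Longrightarrow> is_pushout C m f n f' \<Longrightarrow>
      is_pushout C n g p g' \<Longrightarrow> is_pushout C m (g \<cdot> f) p (g' \<cdot> f')"
    using po_paste by blast
  have q3: "\<And>m n f f'. m \<in> M \<Longrightarrow> n \<in> M \<Longrightarrow> is_pushout C m f n f' \<Longrightarrow> f \<in> ar C \<and> f' \<in> ar C \<and>
      dm C f = dm C m \<and> cd C f = dm C n \<and> dm C f' = cd C m \<and> cd C f' = cd C n"
    using poT by simp
  note POc = quadcat_cat[where Q = "\<lambda>m n f f'. is_pushout C m f n f'", OF MA q1 q2 q3, folded PO_eq]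
  have r1: "\<And>m. m \<in> M \<Longrightarrow> is_FPC C (idt C (dm C m)) m m (idt C (cd C m))"
    using fpc_id MA by blast
  have r2: "\<And>m n p f f' g g'. m \<in> M \<Longrightarrow> n \<in> M \<Longrightarrow> p \<in> M \<Longrightarrow> is_FPC C f n m f' \<Longrightarrow>
      is_FPC C g p n g' \<Longrightarrow> is_FPC C (g \<cdot> f) p m (g' \<cdot> f')"
    using fpc_paste by blast
  have r3: "\<And>m n f f'. m \<in> M \<Longrightarrow> n \<in> M \<Longrightarrow> is_FPC C f n m f' \<Longrightarrow> f \<in> ar C \<and> f' \<in> ar C \<and>
      dm C f = dm C m \<and> cd C f = dm C n \<and> dm C f' = cd C m \<and> cd C f' = cd C n"
  proof -
    fix m n f f' assume "is_FPC C f n m f'"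
    note T = pbT[OF fpc_pb[OF this]]
    show "f \<in> ar C \<and> f' \<in> ar C \<and> dm C f = dm C m \<and> cd C f = dm C n \<and> dm C f' = cd C m \<and> cd C f' = cd C n"
      using T by simp
  qed
  note FPCc = quadcat_cat[where Q = "\<lambda>m n f f'. is_FPC C f n m f'", OF MA r1 r2 r3, folded FPC_eq]
  show ?thesis
  proof (intro conjI impI)
    assume HP: "has_pushouts_along C M"
    show "opfibration (PO_h C M) C (dm C) dom_ar"
      unfolding opfibration_def
    proof (intro conjI ballI impI)
      fix f e assume f: "f \<in> ar C" and e: "e \<in> ob (PO_h C M)" and fe: "dm C e = dm C f"
      have eM: "e \<in> M" using e by (simp add: PO_h_def)
      obtain n f' where n: "n \<in> M" "is_pushout C e f n f'"
        using HP eM f fe unfolding has_pushouts_along_def by metis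
      show "\<exists>\<phi>. \<phi> \<in> ar (PO_h C M) \<and> dm (PO_h C M) \<phi> = e \<and> dom_ar \<phi> = f \<and> opcartesian (PO_h C M) C dom_ar \<phi>"
        using po_opcart[OF n(2) eM n(1)] eM n by (intro exI[of _ "(e, n, f, f')"]) (simp add: PO_h_simps dom_ar_def)
    qed (use POc assms(1) in simp_all)
  next
    assume HF: "has_FPCs_along C M"
    show "fibration (FPC_h C M) C (dm C) dom_ar"
      unfolding fibration_def
    proof (intro conjI ballI impI)
      fix f e assume f: "f \<in> ar C" and e: "e \<in> ob (FPC_h C M)" and fe: "dm C e = cd C f"
      have eM: "e \<in> M" using e by (simp add: FPC_h_def)
      obtain n f' where n: "is_FPC C f e n f'"
        using HF eM f fe unfolding has_FPCs_along_def by metis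
      have nM: "n \<in> M" using Mpb[OF eM fpc_pb[OF n]] .
      show "\<exists>\<phi>. \<phi> \<in> ar (FPC_h C M) \<and> cd (FPC_h C M) \<phi> = e \<and> dom_ar \<phi> = f \<and> cartesian (FPC_h C M) C dom_ar \<phi>"
        using fpc_cart[OF n eM nM] eM nM n by (intro exI[of _ "(n, e, f, f')"]) (simp add: FPC_h_simps dom_ar_def)
    qed (use FPCc assms(1) in simp_all)
  qed
qed

end
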